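(* Let $m\ge3$ and $k\ge1$. The PIN model on any $k$-regular, $k$-edge-connected loopless graph on vertex set $\mathcal M$ is strict Type $\mathcal S$.
   Context: Let $\mathcal M=\{1,\dots,m\}$. The PIN model on a graph $\mathcal G=(\mathcal M,\mathcal E)$, with $\mathcal E$ a finite multiset of 2-element subsets of $\mathcal M$, is defined as follows. Let $\mathcal E^{(n)}$ contain $n$ copies of each edge. Independent Bernoulli(1/2) variables $\xi_e$ are attached to the $e\in\mathcal E^{(n)}$, and $X^n_i=(\xi_e:e\in\mathcal E^{(n)},\ i\in e)$; the single-letter source $X_{\mathcal M}$ is the case $n=1$. $\mathcal G$ is $k$-regular if every vertex lies in exactly $k$ edges. $\mathcal G$ is $k$-edge-connected if for every nonempty proper subset $U\subset\mathcal M$ at least $k$ edges have one endpoint in $U$ and the other in $\mathcal M\setminus U$; equivalently, deleting fewer than $k$ edges never disconnects the graph. $\Delta(\mathcal P)=\frac1{|\mathcal P|-1}[\sum_{A\in\mathcal P}H(X_A)-H(X_{\mathcal M})]$ for partitions with at least 2 cells, where $X_A=(X_i:i\in A)$. The source is strict Type $\mathcal S$ if the singleton partition is the unique minimizer of $\Delta$. *)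

theory Defs
  imports "HOL-Probability.Probability" "HOL-Library.Disjoint_Sets"
begin

text \<open>A graph on the vertex set {1..m} is given by a list E of edges (a finite multiset
  of subsets of vertices, listed in some order; multiplicities are list multiplicities).\<close>

definition vertices :: "nat \<Rightarrow> nat set" where
  "vertices m = {1..m}"

definition loopless_graph :: "nat \<Rightarrow> nat set list \<Rightarrow> bool" where
  "loopless_graph m E \<longleftrightarrow> (\<forall>e\<in>set E. e \<subseteq> vertices m \<and> card e = 2)"

definition k_regular :: "nat \<Rightarrow> nat \<Rightarrow> nat set list \<Rightarrow> bool" where
  "k_regular m k E \<longleftrightarrow> (\<forall>i\<in>vertices m. length (filter (\<lambda>e. i \<in> e) E) = k)"

definition k_edge_connected :: "nat \<Rightarrow> nat \<Rightarrow> nat set list \<Rightarrow> bool" where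
  "k_edge_connected m k E \<longleftrightarrow>
     (\<forall>U. U \<noteq> {} \<longrightarrow> U \<subset> vertices m \<longrightarrow>
        k \<le> length (filter (\<lambda>e. e \<inter> U \<noteq> {} \<and> e - U \<noteq> {}) E))"

text \<open>The single-letter PIN source: independent uniform bits xi_j, one per edge index j;
  X_i = (xi_j : i in E!j); X_A = (X_i : i in A).\<close>

definition pin_bits :: "nat set list \<Rightarrow> (nat \<Rightarrow> bool) pmf" where
  "pin_bits E = pmf_of_set (PiE {..<length E} (\<lambda>_. UNIV :: bool set))"

definition pin_X :: "nat set list \<Rightarrow> nat set \<Rightarrow> (nat \<Rightarrow> bool) \<Rightarrow> (nat \<Rightarrow> nat \<Rightarrow> bool)" where
  "pin_X E A \<omega> = (\<lambda>i\<in>A. \<lambda>j\<in>{j. j < length E \<and> i \<in> E ! j}. \<omega> j)"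

definition shannon_entropy :: "'a pmf \<Rightarrow> real" where
  "shannon_entropy p = - (\<Sum>x\<in>set_pmf p. pmf p x * log 2 (pmf p x))"

definition pin_H :: "nat set list \<Rightarrow> nat set \<Rightarrow> real" where
  "pin_H E A = shannon_entropy (map_pmf (pin_X E A) (pin_bits E))"

definition Delta :: "nat \<Rightarrow> nat set list \<Rightarrow> nat set set \<Rightarrow> real" where
  "Delta m E P = ((\<Sum>A\<in>P. pin_H E A) - pin_H E (vertices m)) / (real (card P) - 1)"

definition singleton_partition :: "nat \<Rightarrow> nat set set" where
  "singleton_partition m = (\<lambda>i. {i}) ` vertices m"

definition strict_type_S :: "nat \<Rightarrow> nat set list \<Rightarrow> bool" where
  "strict_type_S m E \<longleftrightarrow>
     partition_on (vertices m) (singleton_partition m) \<and> 2 \<le> card (singleton_partition m) \<and>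
     (\<forall>P. partition_on (vertices m) P \<longrightarrow> 2 \<le> card P \<longrightarrow> P \<noteq> singleton_partition m \<longrightarrow>
         Delta m E (singleton_partition m) < Delta m E P)"

end

theory Submission
  imports Defs
begin


lemma pin_X_eq_iff:
  "pin_X E A \<omega> = pin_X E A \<omega>' \<longleftrightarrow> (\<forall>j<length E. E!j \<inter> A \<noteq> {} \<longrightarrow> \<omega> j = \<omega>' j)"
proof
  assume h: "pin_X E A \<omega> = pin_X E A \<omega>'"
  show "\<forall>j<length E. E!j \<inter> A \<noteq> {} \<longrightarrow> \<omega> j = \<omega>' j"
  proof (intro allI impI)
    fix j assume j: "j < length E" "E!j \<inter> A \<noteq> {}"
    then obtain i where i: "i \<in> E!j" "i \<in> A" by blast
    have "pin_X E A \<omega> i j = pin_X E A \<omega>' i j" using h by simp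
    thus "\<omega> j = \<omega>' j" using i j by (simp add: pin_X_def)
  qed
next
  assume h: "\<forall>j<length E. E!j \<inter> A \<noteq> {} \<longrightarrow> \<omega> j = \<omega>' j"
  show "pin_X E A \<omega> = pin_X E A \<omega>'"
    unfolding pin_X_def using h by (auto simp: restrict_def fun_eq_iff)
qed

lemma pin_H_eq: "pin_H E A = real (length (filter (\<lambda>e. e \<inter> A \<noteq> {}) E))"
proof -
  define n where "n = length E"
  define \<Omega> where "\<Omega> = PiE {..<n} (\<lambda>_. UNIV :: bool set)"
  define J where "J = {j. j < n \<and> E!j \<inter> A \<noteq> {}}"
  define f where "f = pin_X E A"
  define p where "p = map_pmf f (pmf_of_set \<Omega>)"
  define c :: real where "c = 2 ^ (n - card J) / 2 ^ n"
  have fin: "finite \<Omega>" unfolding \<Omega>_def by (simp add: finite_PiE)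
  have ne: "\<Omega> \<noteq> {}" unfolding \<Omega>_def by (simp add: PiE_eq_empty_iff)
  have cO: "card \<Omega> = 2 ^ n" unfolding \<Omega>_def by (simp add: card_PiE)
  have Jsub: "J \<subseteq> {..<n}" unfolding J_def by auto
  have setp: "set_pmf p = f ` \<Omega>" unfolding p_def using fin ne by simp
  have pc: "pmf p y = c" if y: "y \<in> f ` \<Omega>" for y
  proof -
    obtain w0 where w0: "w0 \<in> \<Omega>" "y = f w0" using y by blast
    have fib: "\<Omega> \<inter> f -` {y} = PiE {..<n} (\<lambda>j. if j \<in> J then {w0 j} else UNIV)"
    proof (rule set_eqI)
      fix \<omega>
      have "\<omega> \<in> \<Omega> \<inter> f -` {y} \<longleftrightarrow> \<omega> \<in> extensional {..<n} \<and> (\<forall>j<n. E!j \<inter> A \<noteq> {} \<longrightarrow> \<omega> j = w0 j)"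
        unfolding \<Omega>_def w0(2) f_def by (simp add: pin_X_eq_iff n_def PiE_iff)
      also have "\<dots> \<longleftrightarrow> \<omega> \<in> PiE {..<n} (\<lambda>j. if j \<in> J then {w0 j} else UNIV)"
        by (auto simp: PiE_iff J_def)
      finally show "\<omega> \<in> \<Omega> \<inter> f -` {y} \<longleftrightarrow> \<omega> \<in> PiE {..<n} (\<lambda>j. if j \<in> J then {w0 j} else UNIV)" .
    qed
    have "card (\<Omega> \<inter> f -` {y}) = (\<Prod>j<n. if j \<in> J then 1 else 2)"
      unfolding fib card_PiE[OF finite_lessThan] by (intro prod.cong) auto
    also have "\<dots> = 2 ^ card ({..<n} - J)"
      by (simp add: prod.If_cases Int_absorb2[OF Jsub] Diff_eq)
    also have "card ({..<n} - J) = n - card J"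
      using Jsub by (simp add: card_Diff_subset finite_subset)
    finally have "card (\<Omega> \<inter> f -` {y}) = 2 ^ (n - card J)" .
    thus ?thesis unfolding p_def c_def using fin ne cO
      by (simp add: pmf_map measure_pmf_of_set)
  qed
  have finS: "finite (f ` \<Omega>)" using fin by simp
  have "(\<Sum>y\<in>f ` \<Omega>. pmf p y) = 1" using sum_pmf_eq_1[OF finS] setp by simp
  hence s1: "(\<Sum>y\<in>f ` \<Omega>. c) = 1" using pc by (metis (mono_tags, lifting) sum.cong)
  have cJ: "card J \<le> n" using Jsub by (metis card_lessThan card_mono finite_lessThan)
  have "log 2 c = - real (card J)"
  proof -
    have "c = 1 / 2 ^ card J" unfolding c_def using cJ
      by (simp add: power_diff)
    thus ?thesis by (simp add: log_divide log_nat_power)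
  qed
  have "shannon_entropy p = - (\<Sum>y\<in>f ` \<Omega>. c * log 2 c)"
    unfolding shannon_entropy_def setp using pc by simp
  also have "\<dots> = - (\<Sum>y\<in>f ` \<Omega>. c) * log 2 c" by (simp add: sum_distrib_right)
  also have "\<dots> = real (card J)" using s1 \<open>log 2 c = _\<close> by simp
  finally have "shannon_entropy p = real (card J)" .
  moreover have "card J = length (filter (\<lambda>e. e \<inter> A \<noteq> {}) E)"
    unfolding J_def n_def by (simp add: length_filter_conv_card)
  moreover have "pin_H E A = shannon_entropy p"
    unfolding pin_H_def pin_bits_def p_def f_def \<Omega>_def n_def ..
  ultimately show ?thesis by simp
qed



lemma sum_filter_swap:
  assumes "finite P"
  shows "(\<Sum>A\<in>P. length (filter (Q A) E)) = sum_list (map (\<lambda>e. card {A\<in>P. Q A e}) E)"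
proof (induction E)
  case Nil then show ?case by simp
next
  case (Cons e E)
  have "(\<Sum>A\<in>P. length (filter (Q A) (e # E))) =
        (\<Sum>A\<in>P. (if Q A e then 1 else 0) + length (filter (Q A) E))"
    by (intro sum.cong) auto
  also have "\<dots> = (\<Sum>A\<in>P. (if Q A e then 1 else 0)) + (\<Sum>A\<in>P. length (filter (Q A) E))"
    by (rule sum.distrib)
  also have "(\<Sum>A\<in>P. (if Q A e then 1 else 0)) = card {A\<in>P. Q A e}"
    using assms by (simp add: sum.If_cases Int_def)
  finally show ?case using Cons by simp
qed

lemma edge_count:
  assumes P: "partition_on M P" and e: "e \<subseteq> M" "card e = 2"
  shows "2 * card {A\<in>P. e \<inter> A \<noteq> {}} = 2 + card {A\<in>P. e \<inter> A \<noteq> {} \<and> e - A \<noteq> {}}"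
proof -
  obtain a b where ab: "e = {a, b}" "a \<noteq> b" using e(2) by (auto simp: card_2_iff)
  have cov: "M = \<Union>P" using partition_onD1[OF P] .
  have dis: "\<And>A B x. A \<in> P \<Longrightarrow> B \<in> P \<Longrightarrow> x \<in> A \<Longrightarrow> x \<in> B \<Longrightarrow> A = B"
    using partition_onD2[OF P] by (auto simp: disjoint_def)
  obtain Ca where Ca: "Ca \<in> P" "a \<in> Ca" using e(1) ab cov by auto
  obtain Cb where Cb: "Cb \<in> P" "b \<in> Cb" using e(1) ab cov by auto
  have T: "{A\<in>P. e \<inter> A \<noteq> {}} = {Ca, Cb}"
    using Ca Cb dis ab by blast
  show ?thesis
  proof (cases "Ca = Cb")
    case True
    have B: "{A\<in>P. e \<inter> A \<noteq> {} \<and> e - A \<noteq> {}} = {}"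
      using Ca Cb dis ab True by blast
    show ?thesis unfolding B T using True by simp
  next
    case False
    have B: "{A\<in>P. e \<inter> A \<noteq> {} \<and> e - A \<noteq> {}} = {Ca, Cb}"
      using Ca Cb dis ab False by blast
    show ?thesis unfolding B T using False by simp
  qed
qed

lemma sum_list_rel:
  assumes "\<And>e. e \<in> set E \<Longrightarrow> 2 * t e = 2 + (b e :: nat)"
  shows "2 * sum_list (map t E) = 2 * length E + sum_list (map b E)"
  using assms by (induction E) auto

lemma partition_sum_identity:
  assumes P: "partition_on (vertices m) P" and G: "loopless_graph m E"
  shows "2 * (\<Sum>A\<in>P. length (filter (\<lambda>e. e \<inter> A \<noteq> {}) E)) =
         2 * length E + (\<Sum>A\<in>P. length (filter (\<lambda>e. e \<inter> A \<noteq> {} \<and> e - A \<noteq> {}) E))"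
proof -
  have fP: "finite P" using finite_elements[OF _ P] by (simp add: vertices_def)
  show ?thesis
    unfolding sum_filter_swap[OF fP, of "\<lambda>A e. e \<inter> A \<noteq> {}"]
      sum_filter_swap[OF fP, of "\<lambda>A e. e \<inter> A \<noteq> {} \<and> e - A \<noteq> {}"]
    by (rule sum_list_rel, rule edge_count[OF P]) (use G in \<open>auto simp: loopless_graph_def\<close>)
qed

lemma card_partition_lt:
  assumes P: "partition_on (vertices m) P" and ne: "P \<noteq> singleton_partition m"
  shows "card P < m"
proof -
  have fM: "finite (vertices m)" by (simp add: vertices_def)
  have fP: "finite P" using finite_elements[OF fM P] .
  have cov: "vertices m = \<Union>P" using partition_onD1[OF P] .
  have nemp: "{} \<notin> P" using partition_onD3[OF P] .
  have dis: "disjoint P" using partition_onD2[OF P] .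
  have "\<exists>A\<in>P. 2 \<le> card A"
  proof (rule ccontr)
    assume "\<not> ?thesis"
    hence small: "\<forall>A\<in>P. card A \<le> 1" by auto
    have "\<forall>A\<in>P. \<exists>x. A = {x}"
    proof
      fix A assume A: "A \<in> P"
      have fA: "finite A" using A cov fM by (metis Union_upper finite_subset)
      have "A \<noteq> {}" using A nemp by auto
      hence "card A = 1" using small A fA by (simp add: le_antisym Suc_leI card_gt_0_iff)
      thus "\<exists>x. A = {x}" by (simp add: card_1_singleton_iff)
    qed
    hence "P = singleton_partition m"
      unfolding singleton_partition_def cov
    proof (intro set_eqI iffI)
      fix A assume h: "\<forall>A\<in>P. \<exists>x. A = {x}" and A: "A \<in> P"
      then obtain x where "A = {x}" by blast
      thus "A \<in> (\<lambda>i. {i}) ` \<Union>P" using A by auto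
    next
      fix A assume h: "\<forall>A\<in>P. \<exists>x. A = {x}" and A: "A \<in> (\<lambda>i. {i}) ` \<Union>P"
      then obtain i B where "A = {i}" "i \<in> B" "B \<in> P" by blast
      moreover then obtain x where "B = {x}" using h by blast
      ultimately show "A \<in> P" by simp
    qed
    with ne show False by simp
  qed
  then obtain A0 where A0: "A0 \<in> P" "2 \<le> card A0" by blast
  have fin_cells: "\<forall>A\<in>P. finite A" using cov fM by (metis Union_upper finite_subset)
  have "m = card (\<Union>P)" unfolding cov[symmetric] by (simp add: vertices_def)
  also have "\<dots> = (\<Sum>A\<in>P. card A)"
    using card_Union_disjoint[OF dis] fin_cells by blast
  also have "\<dots> = card A0 + (\<Sum>A\<in>P-{A0}. card A)"
    using fP A0 by (simp add: sum.remove)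
  also have "(\<Sum>A\<in>P-{A0}. card A) \<ge> (\<Sum>A\<in>P-{A0}. 1)"
  proof (rule sum_mono)
    fix A assume "A \<in> P - {A0}"
    hence "A \<in> P" "A \<noteq> {}" using nemp by auto
    thus "1 \<le> card A" using fin_cells by (simp add: Suc_leI card_gt_0_iff)
  qed
  moreover have "(\<Sum>A\<in>P-{A0}. (1::nat)) = card P - 1" using A0 fP by simp
  moreover have "card P \<ge> 1" using A0 fP by (metis card_0_eq empty_iff less_one not_le)
  ultimately show ?thesis using A0(2) by linarith
qed


lemma pin_H_all:
  assumes G: "loopless_graph m E"
  shows "pin_H E (vertices m) = real (length E)"
proof -
  have "filter (\<lambda>e. e \<inter> vertices m \<noteq> {}) E = E"
  proof (rule filter_True, intro ballI)
    fix e assume "e \<in> set E"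
    hence "e \<subseteq> vertices m" "card e = 2" using G by (auto simp: loopless_graph_def)
    thus "e \<inter> vertices m \<noteq> {}" by (metis Int_absorb2 card.empty zero_neq_numeral)
  qed
  thus ?thesis by (simp add: pin_H_eq)
qed

lemma Delta_eq:
  assumes P: "partition_on (vertices m) P" and G: "loopless_graph m E"
  shows "Delta m E P = real (\<Sum>A\<in>P. length (filter (\<lambda>e. e \<inter> A \<noteq> {} \<and> e - A \<noteq> {}) E)) / 2 / (real (card P) - 1)"
proof -
  define T where "T = (\<Sum>A\<in>P. length (filter (\<lambda>e. e \<inter> A \<noteq> {}) E))"
  define S where "S = (\<Sum>A\<in>P. length (filter (\<lambda>e. e \<inter> A \<noteq> {} \<and> e - A \<noteq> {}) E))"
  have id: "2 * T = 2 * length E + S" unfolding T_def S_def by (rule partition_sum_identity[OF P G])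
  have h1: "(\<Sum>A\<in>P. pin_H E A) = real T" unfolding T_def by (simp add: pin_H_eq)
  have h2: "real T - real (length E) = real S / 2"
  proof -
    have "2 * real T = 2 * real (length E) + real S" using id by (metis of_nat_add of_nat_mult of_nat_numeral)
    thus ?thesis by simp
  qed
  show ?thesis unfolding Delta_def pin_H_all[OF G] S_def[symmetric] h1 h2 by simp
qed

theorem corollary4:
  fixes m k :: nat and E :: "nat set list"
  assumes "3 \<le> m" and "1 \<le> k"
    and "loopless_graph m E"
    and "k_regular m k E"
    and "k_edge_connected m k E"
  shows "strict_type_S m E"
proof -
  note G = assms(3)
  define bd where "bd A = length (filter (\<lambda>e. e \<inter> A \<noteq> {} \<and> e - A \<noteq> {}) E)" for A
  have sp: "partition_on (vertices m) (singleton_partition m)"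
    unfolding singleton_partition_def by (rule partition_on_singletons)
  have inj: "inj_on (\<lambda>i. {i}) (vertices m)" by (auto simp: inj_on_def)
  have csp: "card (singleton_partition m) = m"
    unfolding singleton_partition_def using card_image[OF inj] by (simp add: vertices_def)
  have bd1: "bd {i} = k" if i: "i \<in> vertices m" for i
  proof -
    have "filter (\<lambda>e. e \<inter> {i} \<noteq> {} \<and> e - {i} \<noteq> {}) E = filter (\<lambda>e. i \<in> e) E"
    proof (rule filter_cong[OF refl])
      fix e assume "e \<in> set E"
      hence c2: "card e = 2" using G by (auto simp: loopless_graph_def)
      show "(e \<inter> {i} \<noteq> {} \<and> e - {i} \<noteq> {}) = (i \<in> e)"
      proof
        assume "i \<in> e"
        moreover have "e - {i} \<noteq> {}"
        proof
          assume "e - {i} = {}"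
          hence "e \<subseteq> {i}" by blast
          hence "card e \<le> 1" using card_mono[of "{i}" e] by simp
          thus False using c2 by simp
        qed
        ultimately show "e \<inter> {i} \<noteq> {} \<and> e - {i} \<noteq> {}" by blast
      qed blast
    qed
    thus ?thesis using assms(4) i unfolding bd_def k_regular_def by simp
  qed
  have Ssp: "(\<Sum>A\<in>singleton_partition m. bd A) = m * k"
  proof -
    have "(\<Sum>A\<in>singleton_partition m. bd A) = (\<Sum>i\<in>vertices m. bd {i})"
      unfolding singleton_partition_def by (rule sum.reindex[OF inj, unfolded comp_def])
    also have "\<dots> = (\<Sum>i\<in>vertices m. k)" using bd1 by simp
    also have "\<dots> = m * k" by (simp add: vertices_def)
    finally show ?thesis .
  qed
  have Dsp: "Delta m E (singleton_partition m) = real (m * k) / 2 / (real m - 1)"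
    using Delta_eq[OF sp G, folded bd_def, unfolded Ssp csp] .
  show ?thesis unfolding strict_type_S_def
  proof (intro conjI allI impI)
    show "partition_on (vertices m) (singleton_partition m)" by (rule sp)
    show "2 \<le> card (singleton_partition m)" using csp assms(1) by simp
  next
    fix P assume P: "partition_on (vertices m) P" and p2: "2 \<le> card P"
      and ne: "P \<noteq> singleton_partition m"
    have fM: "finite (vertices m)" by (simp add: vertices_def)
    have fP: "finite P" using finite_elements[OF fM P] .
    have cov: "vertices m = \<Union>P" using partition_onD1[OF P] .
    have nemp: "{} \<notin> P" using partition_onD3[OF P] .
    have dis: "\<And>A B x. A \<in> P \<Longrightarrow> B \<in> P \<Longrightarrow> x \<in> A \<Longrightarrow> x \<in> B \<Longrightarrow> A = B"
      using partition_onD2[OF P] by (auto simp: disjoint_def)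
    have lt: "card P < m" by (rule card_partition_lt[OF P ne])
    have bdk: "k \<le> bd A" if A: "A \<in> P" for A
    proof -
      have "A \<noteq> {}" using A nemp by auto
      moreover have "A \<subset> vertices m"
      proof -
        have sub: "A \<subseteq> vertices m" using A cov by auto
        have "card (P - {A}) \<ge> 1" using A fP p2 by simp
        hence "P - {A} \<noteq> {}" by (cases "P - {A} = {}") auto
        then obtain B where B: "B \<in> P" "B \<noteq> A" by blast
        have "B \<noteq> {}" using nemp B(1) by auto
        then obtain x where x: "x \<in> B" by blast
        have "x \<notin> A" using dis A B x by blast
        moreover have "x \<in> vertices m" using B x cov by auto
        ultimately show ?thesis using sub by blast
      qed
      ultimately show ?thesis using assms(5) unfolding k_edge_connected_def bd_def by blast
    qed
    have SP: "card P * k \<le> (\<Sum>A\<in>P. bd A)"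
    proof -
      have "(\<Sum>A\<in>P. k) \<le> (\<Sum>A\<in>P. bd A)" by (rule sum_mono) (rule bdk)
      thus ?thesis by simp
    qed
    have DP: "Delta m E P = real (\<Sum>A\<in>P. bd A) / 2 / (real (card P) - 1)"
      using Delta_eq[OF P G, folded bd_def] .
    define p where "p = real (card P)"
    define S where "S = real (\<Sum>A\<in>P. bd A)"
    have hp: "2 \<le> p" "p + 1 \<le> real m" unfolding p_def using p2 lt by auto
    have hS: "p * real k \<le> S" unfolding p_def S_def of_nat_mult[symmetric] of_nat_le_iff by (rule SP)
    have hk: "1 \<le> real k" using assms(2) by simp
    have "real (m * k) / 2 / (real m - 1) < S / 2 / (p - 1)"
    proof -
      have pos1: "0 < p - 1" using hp by simp
      have pos2: "0 < real m - 1" using hp by simp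
      have "real m * real k * (p - 1) < p * real k * (real m - 1)"
      proof -
        have "p * real k * (real m - 1) - real m * real k * (p - 1) = real k * (real m - p)"
          by (simp add: algebra_simps)
        moreover have "0 < real k * (real m - p)" using hk hp by simp
        ultimately show ?thesis by linarith
      qed
      also have "\<dots> \<le> S * (real m - 1)" using hS pos2 by (simp add: mult_right_mono)
      finally have lt1: "real m * real k * (p - 1) < S * (real m - 1)" .
      have e1: "real m * real k * (2 * p - 2) = 2 * (real m * real k * (p - 1))" by (simp add: algebra_simps)
      have e2: "S * (2 * real m - 2) = 2 * (S * (real m - 1))" by (simp add: algebra_simps)
      have "real m * real k * (2 * p - 2) < S * (2 * real m - 2)" unfolding e1 e2 using lt1 by simp
      thus ?thesis using pos1 pos2 by (simp add: divide_simps)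
    qed
    thus "Delta m E (singleton_partition m) < Delta m E P"
      unfolding Dsp DP S_def[symmetric] p_def[symmetric] .
  qed
qed

end
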